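(* Let $\hat{x}$ be the final value of the vector $x$ in Algorithm 1 and let $OPT$ be a set maximizing $f$ among subsets of $N$ of size at most $k$. If $\|\hat{x}\|_1<k$, then $F(\hat{x}+\mathbf{1}_{OPT\setminus\mathrm{supp}(\hat{x})})\ge(1-p)\cdot\big[p\cdot f(OPT)+(1-p)\cdot f(OPT\setminus\mathrm{supp}(\hat{x}))\big]$.
   Context: Setting: finite ground set $N$ whose elements arrive one at a time in a stream, non-negative submodular $f\colon 2^N\to\mathbb{R}_{\ge 0}$, positive integer $k$. $\mathbf{1}_A$ is the characteristic vector of $A$. $F$ is the multilinear extension of $f$: $F(x)=\sum_{A\subseteq N} f(A)\prod_{u\in A}x_u\prod_{u\notin A}(1-x_u)$ for $x\in[0,1]^N$, and $\partial_uF(x)=F(x\vee \mathbf{1}_u)-F(x\wedge\mathbf{1}_{N\setminus\{u\}})$ (coordinatewise max/min). $\mathrm{supp}(x)=\{u: x_u>0\}$. Algorithm 1 has parameters $p\in(0,1)$, $c>0$, $\alpha\in(0,1]$ and a number $\tau$. It starts with $x=\mathbf{0}$, and when an element $u$ arrives, if $\partial_uF(x)\ge c\tau/k$ it sets $x\leftarrow x+\min\{p,\,k-\|x\|_1\}\cdot\mathbf{1}_u$ (otherwise $x$ is unchanged). After the stream ends, it computes a random set $S_1$ with $|S_1|\le k$ and $\mathbb{E}[f(S_1)]\ge F(x)$, and a random set $S_2\subseteq\mathrm{supp}(x)$ with $|S_2|\le k$ and $\mathbb{E}[f(S_2)]\ge\alpha\cdot\max_{S\subseteq\mathrm{supp}(x),|S|\le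 k}f(S)$, and outputs the better of $S_1,S_2$. *)

theory Defs
  imports Main "HOL-Library.Indicator_Function"
begin

definition submodular :: "'a set \<Rightarrow> ('a set \<Rightarrow> real) \<Rightarrow> bool" where
  "submodular N f \<longleftrightarrow>
     (\<forall>A B. A \<subseteq> N \<longrightarrow> B \<subseteq> N \<longrightarrow> f (A \<union> B) + f (A \<inter> B) \<le> f A + f B)"

(* Multilinear extension F of f; vectors in [0,1]^N are functions 'a => real *)
definition multilinear :: "'a set \<Rightarrow> ('a set \<Rightarrow> real) \<Rightarrow> ('a \<Rightarrow> real) \<Rightarrow> real" where
  "multilinear N f x =
     (\<Sum>A\<in>Pow N. f A * (\<Prod>u\<in>A. x u) * (\<Prod>u\<in>N - A. 1 - x u))"

definition partialF :: "'a set \<Rightarrow> ('a set \<Rightarrow> real) \<Rightarrow> ('a \<Rightarrow> real) \<Rightarrow> 'a \<Rightarrow> real" where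
  "partialF N f x u =
     multilinear N f (\<lambda>v. max (x v) (indicator {u} v))
     - multilinear N f (\<lambda>v. min (x v) (indicator (N - {u}) v))"

definition supp :: "'a set \<Rightarrow> ('a \<Rightarrow> real) \<Rightarrow> 'a set" where
  "supp N x = {u \<in> N. x u > 0}"

definition norm1 :: "'a set \<Rightarrow> ('a \<Rightarrow> real) \<Rightarrow> real" where
  "norm1 N x = (\<Sum>u\<in>N. \<bar>x u\<bar>)"

definition alg1_step ::
  "'a set \<Rightarrow> ('a set \<Rightarrow> real) \<Rightarrow> nat \<Rightarrow> real \<Rightarrow> real \<Rightarrow> real
     \<Rightarrow> ('a \<Rightarrow> real) \<Rightarrow> 'a \<Rightarrow> ('a \<Rightarrow> real)" where
  "alg1_step N f k p c \<tau> x u =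
     (if partialF N f x u \<ge> c * \<tau> / real k
      then (\<lambda>v. x v + min p (real k - norm1 N x) * indicator {u} v)
      else x)"

definition alg1_x ::
  "'a set \<Rightarrow> ('a set \<Rightarrow> real) \<Rightarrow> nat \<Rightarrow> real \<Rightarrow> real \<Rightarrow> real
     \<Rightarrow> 'a list \<Rightarrow> ('a \<Rightarrow> real)" where
  "alg1_x N f k p c \<tau> stream = foldl (alg1_step N f k p c \<tau>) (\<lambda>_. 0) stream"

end

theory Submission
  imports Defs
begin

lemma ml_insert:
  assumes fin: "finite N" and a: "a \<notin> N"
  shows "multilinear (insert a N) g y
     = y a * multilinear N (\<lambda>A. g (insert a A)) y + (1 - y a) * multilinear N g y"
proof -
  have P: "Pow (insert a N) = Pow N \<union> insert a ` Pow N" by (rule Pow_insert)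
  have disj: "Pow N \<inter> insert a ` Pow N = {}" using a by auto
  have inj: "inj_on (insert a) (Pow N)" using a by (auto simp: inj_on_def)
  have finP: "finite (Pow N)" using fin by simp
  define h where "h A = g A * (\<Prod>u\<in>A. y u) * (\<Prod>u\<in>insert a N - A. 1 - y u)" for A
  have "multilinear (insert a N) g y = sum h (Pow N \<union> insert a ` Pow N)"
    unfolding multilinear_def h_def P ..
  also have "\<dots> = sum h (Pow N) + sum h (insert a ` Pow N)"
    by (rule sum.union_disjoint) (use finP disj in auto)
  also have "sum h (insert a ` Pow N) = sum (h \<circ> insert a) (Pow N)"
    by (rule sum.reindex[OF inj])
  also have "sum (h \<circ> insert a) (Pow N) = y a * multilinear N (\<lambda>A. g (insert a A)) y"
    unfolding multilinear_def sum_distrib_left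
  proof (rule sum.cong[OF refl])
    fix A assume A: "A \<in> Pow N"
    then have fA: "finite A" using fin finite_subset by auto
    have aA: "a \<notin> A" using A a by auto
    have e: "insert a N - insert a A = N - A" using a by auto
    show "(h \<circ> insert a) A = y a * (g (insert a A) * prod y A * (\<Prod>u\<in>N - A. 1 - y u))"
      unfolding h_def o_def e using fA aA by simp
  qed
  also have "sum h (Pow N) = (1 - y a) * multilinear N g y"
    unfolding multilinear_def sum_distrib_left
  proof (rule sum.cong[OF refl])
    fix A assume A: "A \<in> Pow N"
    have aA: "a \<notin> A" using A a by auto
    have e: "insert a N - A = insert a (N - A)" using aA by auto
    show "h A = (1 - y a) * (g A * prod y A * (\<Prod>u\<in>N - A. 1 - y u))"
      unfolding h_def e using fin a by simp
  qed
  finally show ?thesis by simp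
qed

lemma ml_empty: "multilinear {} g y = g {}"
  unfolding multilinear_def by simp

lemma ml_nonneg:
  assumes "finite N" "\<forall>A\<subseteq>N. g A \<ge> 0" "\<forall>u\<in>N. 0 \<le> y u \<and> y u \<le> 1"
  shows "multilinear N g y \<ge> 0"
  unfolding multilinear_def using assms
  by (intro sum_nonneg mult_nonneg_nonneg prod_nonneg) auto

lemma ml_lin4:
  "multilinear N (\<lambda>A. g1 A + g2 A - g3 A - g4 A) y
   = multilinear N g1 y + multilinear N g2 y - multilinear N g3 y - multilinear N g4 y"
  unfolding multilinear_def by (simp add: algebra_simps sum.distrib sum_subtractf)

lemma conc:
  assumes finC: "finite C" and finB: "finite B" and sm: "submodular N f"
    and p: "0 \<le> p" "p \<le> 1"
  shows "B \<inter> C = {} \<Longrightarrow> T \<inter> (B \<union> C) = {} \<Longrightarrow> T \<union> B \<union> C \<subseteq> N \<Longrightarrow>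
    multilinear (B \<union> C) (\<lambda>R. f (T \<union> R)) (\<lambda>_. p)
     \<ge> (1 - p) * multilinear B (\<lambda>R. f (T \<union> R)) (\<lambda>_. p)
       + p * multilinear B (\<lambda>R. f (T \<union> C \<union> R)) (\<lambda>_. p)"
  using finC
proof (induction C arbitrary: T rule: finite_induct)
  case empty
  then show ?case by (simp add: algebra_simps)
next
  case (insert a C)
  have aBC: "a \<notin> B \<union> C" using insert by auto
  have eq1: "B \<union> insert a C = insert a (B \<union> C)" by auto
  have finBC: "finite (B \<union> C)" using finB insert by auto
  have rec: "multilinear (B \<union> insert a C) (\<lambda>R. f (T \<union> R)) (\<lambda>_. p)
     = p * multilinear (B \<union> C) (\<lambda>R. f (insert a T \<union> R)) (\<lambda>_. p)
       + (1 - p) * multilinear (B \<union> C) (\<lambda>R. f (T \<union> R)) (\<lambda>_. p)"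
    unfolding eq1 by (subst ml_insert[OF finBC aBC]) simp
  have IH1: "multilinear (B \<union> C) (\<lambda>R. f (insert a T \<union> R)) (\<lambda>_. p)
     \<ge> (1 - p) * multilinear B (\<lambda>R. f (insert a T \<union> R)) (\<lambda>_. p)
       + p * multilinear B (\<lambda>R. f (insert a T \<union> C \<union> R)) (\<lambda>_. p)"
    using insert by (intro insert.IH) auto
  have IH2: "multilinear (B \<union> C) (\<lambda>R. f (T \<union> R)) (\<lambda>_. p)
     \<ge> (1 - p) * multilinear B (\<lambda>R. f (T \<union> R)) (\<lambda>_. p)
       + p * multilinear B (\<lambda>R. f (T \<union> C \<union> R)) (\<lambda>_. p)"
    using insert by (intro insert.IH) auto
  have sub: "multilinear B (\<lambda>R. f (insert a T \<union> R) + f (T \<union> C \<union> R) - f (T \<union> R)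
       - f (T \<union> insert a C \<union> R)) (\<lambda>_. p) \<ge> 0"
  proof (rule ml_nonneg[OF finB])
    show "\<forall>u\<in>B. 0 \<le> p \<and> p \<le> 1" using p by auto
    show "\<forall>R\<subseteq>B. 0 \<le> f (insert a T \<union> R) + f (T \<union> C \<union> R) - f (T \<union> R) - f (T \<union> insert a C \<union> R)"
    proof (intro allI impI)
      fix R assume R: "R \<subseteq> B"
      have s1: "insert a T \<union> R \<subseteq> N" "T \<union> C \<union> R \<subseteq> N" using insert R by auto
      have u: "(insert a T \<union> R) \<union> (T \<union> C \<union> R) = T \<union> insert a C \<union> R" by auto
      have i: "(insert a T \<union> R) \<inter> (T \<union> C \<union> R) = T \<union> R" using insert R by auto
      show "0 \<le> f (insert a T \<union> R) + f (T \<union> C \<union> R) - f (T \<union> R) - f (T \<union> insert a C \<union> R)"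
        using sm s1 u i unfolding submodular_def by (metis diff_ge_0_iff_ge add.commute diff_diff_eq)
    qed
  qed
  have e3: "insert a T \<union> C = T \<union> insert a C" by auto
  have pp: "p * (1 - p) \<ge> 0" using p by simp
  have "p * (1 - p) * multilinear B (\<lambda>R. f (insert a T \<union> R) + f (T \<union> C \<union> R) - f (T \<union> R)
       - f (T \<union> insert a C \<union> R)) (\<lambda>_. p) \<ge> 0"
    using pp sub by simp
  then have sub2: "p * (1 - p) * (multilinear B (\<lambda>R. f (insert a T \<union> R)) (\<lambda>_. p)
     + multilinear B (\<lambda>R. f (T \<union> C \<union> R)) (\<lambda>_. p) - multilinear B (\<lambda>R. f (T \<union> R)) (\<lambda>_. p)
     - multilinear B (\<lambda>R. f (T \<union> insert a C \<union> R)) (\<lambda>_. p)) \<ge> 0"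
    by (simp only: ml_lin4)
  have m1: "p * multilinear (B \<union> C) (\<lambda>R. f (insert a T \<union> R)) (\<lambda>_. p) \<ge>
     p * ((1 - p) * multilinear B (\<lambda>R. f (insert a T \<union> R)) (\<lambda>_. p)
       + p * multilinear B (\<lambda>R. f (T \<union> insert a C \<union> R)) (\<lambda>_. p))"
    using IH1 p unfolding e3 by (intro mult_left_mono) auto
  have m2: "(1 - p) * multilinear (B \<union> C) (\<lambda>R. f (T \<union> R)) (\<lambda>_. p) \<ge>
     (1 - p) * ((1 - p) * multilinear B (\<lambda>R. f (T \<union> R)) (\<lambda>_. p)
       + p * multilinear B (\<lambda>R. f (T \<union> C \<union> R)) (\<lambda>_. p))"
    using IH2 p by (intro mult_left_mono) auto
  show ?case unfolding rec using m1 m2 sub2 by (simp add: algebra_simps)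
qed

lemma bridge:
  assumes finN: "finite N" and p: "p \<noteq> 0" "p \<noteq> 1"
  shows "(\<forall>v\<in>N. y v = 0 \<or> y v = 1 \<or> y v = p) \<Longrightarrow>
    multilinear N g y = multilinear {v\<in>N. y v = p} (\<lambda>R. g ({v\<in>N. y v = 1} \<union> R)) (\<lambda>_. p)"
  using finN
proof (induction N arbitrary: g rule: finite_induct)
  case empty
  then show ?case by (simp add: ml_empty)
next
  case (insert a N)
  have IH: "\<And>g. multilinear N g y = multilinear {v\<in>N. y v = p} (\<lambda>R. g ({v\<in>N. y v = 1} \<union> R)) (\<lambda>_. p)"
    using insert by auto
  have finS: "finite {v\<in>N. y v = p}" using insert by auto
  have rec: "multilinear (insert a N) g y
     = y a * multilinear N (\<lambda>A. g (insert a A)) y + (1 - y a) * multilinear N g y"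
    by (rule ml_insert) (use insert in auto)
  consider "y a = 0" | "y a = 1" | "y a = p" using insert by auto
  then show ?case
  proof cases
    case 1
    have e1: "{v\<in>insert a N. y v = p} = {v\<in>N. y v = p}" using 1 p by auto
    have e2: "{v\<in>insert a N. y v = 1} = {v\<in>N. y v = 1}" using 1 by auto
    show ?thesis unfolding rec e1 e2 using 1 IH by simp
  next
    case 2
    have e1: "{v\<in>insert a N. y v = p} = {v\<in>N. y v = p}" using 2 p by auto
    have e2: "{v\<in>insert a N. y v = 1} = insert a {v\<in>N. y v = 1}" using 2 by auto
    show ?thesis unfolding rec e1 e2 using 2 IH[of "\<lambda>A. g (insert a A)"] by simp
  next
    case 3
    have e1: "{v\<in>insert a N. y v = p} = insert a {v\<in>N. y v = p}" using 3 by auto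
    have e2: "{v\<in>insert a N. y v = 1} = {v\<in>N. y v = 1}" using 3 p by auto
    have an: "a \<notin> {v\<in>N. y v = p}" using insert by auto
    show ?thesis unfolding rec e1 e2 ml_insert[OF finS an]
      using 3 IH[of "\<lambda>A. g (insert a A)"] IH[of g] by simp
  qed
qed

lemma norm1_upd:
  assumes "finite N" "u \<in> N" "\<forall>v. x v \<ge> 0" "d \<ge> 0"
  shows "norm1 N (\<lambda>v. x v + d * indicator {u} v) = norm1 N x + d"
proof -
  have "norm1 N (\<lambda>v. x v + d * indicator {u} v) = (\<Sum>v\<in>N. x v + d * indicator {u} v)"
    unfolding norm1_def using assms by (intro sum.cong) (auto simp: indicator_def)
  also have "\<dots> = (\<Sum>v\<in>N. x v) + d" using assms by (simp add: sum.distrib indicator_def)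
  also have "(\<Sum>v\<in>N. x v) = norm1 N x" unfolding norm1_def using assms by simp
  finally show ?thesis .
qed

lemma alg_inv:
  assumes finN: "finite N" and p: "0 < p"
  shows "distinct xs \<Longrightarrow> set xs \<subseteq> N \<Longrightarrow>
    (\<forall>v. foldl (alg1_step N f k p c \<tau>) (\<lambda>_. 0) xs v \<ge> 0)
    \<and> norm1 N (foldl (alg1_step N f k p c \<tau>) (\<lambda>_. 0) xs) \<le> real k
    \<and> (\<forall>v. v \<notin> set xs \<longrightarrow> foldl (alg1_step N f k p c \<tau>) (\<lambda>_. 0) xs v = 0)
    \<and> (norm1 N (foldl (alg1_step N f k p c \<tau>) (\<lambda>_. 0) xs) < real k \<longrightarrow>
        (\<forall>v. foldl (alg1_step N f k p c \<tau>) (\<lambda>_. 0) xs v = 0 \<or> foldl (alg1_step N f k p c \<tau>) (\<lambda>_. 0) xs v = p))"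
proof (induction xs rule: rev_induct)
  case Nil
  then show ?case by (simp add: norm1_def)
next
  case (snoc u xs)
  define x where "x = foldl (alg1_step N f k p c \<tau>) (\<lambda>_. 0) xs"
  have IH: "(\<forall>v. x v \<ge> 0) \<and> norm1 N x \<le> real k \<and> (\<forall>v. v \<notin> set xs \<longrightarrow> x v = 0)
     \<and> (norm1 N x < real k \<longrightarrow> (\<forall>v. x v = 0 \<or> x v = p))"
    unfolding x_def using snoc by auto
  have uN: "u \<in> N" and ux: "u \<notin> set xs" using snoc by auto
  have F: "foldl (alg1_step N f k p c \<tau>) (\<lambda>_. 0) (xs @ [u]) = alg1_step N f k p c \<tau> x u"
    unfolding x_def by simp
  show ?case unfolding F
  proof (cases "partialF N f x u \<ge> c * \<tau> / real k")
    case False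
    then show "(\<forall>v. alg1_step N f k p c \<tau> x u v \<ge> 0)
    \<and> norm1 N (alg1_step N f k p c \<tau> x u) \<le> real k
    \<and> (\<forall>v. v \<notin> set (xs @ [u]) \<longrightarrow> alg1_step N f k p c \<tau> x u v = 0)
    \<and> (norm1 N (alg1_step N f k p c \<tau> x u) < real k \<longrightarrow>
        (\<forall>v. alg1_step N f k p c \<tau> x u v = 0 \<or> alg1_step N f k p c \<tau> x u v = p))"
      unfolding alg1_step_def using IH by simp
  next
    case True
    define d where "d = min p (real k - norm1 N x)"
    have st: "alg1_step N f k p c \<tau> x u = (\<lambda>v. x v + d * indicator {u} v)"
      unfolding alg1_step_def d_def using True by simp
    have d0: "d \<ge> 0" unfolding d_def using IH p by simp
    have nn: "norm1 N (\<lambda>v. x v + d * indicator {u} v) = norm1 N x + d"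
      using norm1_upd[OF finN uN] IH d0 by blast
    show "(\<forall>v. alg1_step N f k p c \<tau> x u v \<ge> 0)
    \<and> norm1 N (alg1_step N f k p c \<tau> x u) \<le> real k
    \<and> (\<forall>v. v \<notin> set (xs @ [u]) \<longrightarrow> alg1_step N f k p c \<tau> x u v = 0)
    \<and> (norm1 N (alg1_step N f k p c \<tau> x u) < real k \<longrightarrow>
        (\<forall>v. alg1_step N f k p c \<tau> x u v = 0 \<or> alg1_step N f k p c \<tau> x u v = p))"
      unfolding st nn
    proof (intro conjI impI allI)
      fix v show "x v + d * indicator {u} v \<ge> 0" using IH d0 by (simp add: indicator_def)
    next
      show "norm1 N x + d \<le> real k" unfolding d_def by simp
    next
      fix v assume "v \<notin> set (xs @ [u])"
      then show "x v + d * indicator {u} v = 0" using IH by (simp add: indicator_def)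
    next
      fix v assume lt: "norm1 N x + d < real k"
      then have dp: "d = p" unfolding d_def by (auto simp: min_def split: if_splits)
      have xu: "x u = 0" using IH ux by simp
      have "norm1 N x < real k" using lt d0 by simp
      then show "x v + d * indicator {u} v = 0 \<or> x v + d * indicator {u} v = p"
        using IH xu dp by (cases "v = u") (auto simp: indicator_def)
    qed
  qed
qed

theorem lemma3p4:
  fixes N :: "'a set" and f :: "'a set \<Rightarrow> real" and k :: nat
    and p c \<tau> :: real and stream :: "'a list" and OPT :: "'a set"
  assumes "finite N"
    and "\<forall>A\<subseteq>N. f A \<ge> 0"
    and "submodular N f"
    and "k > 0"
    and "0 < p" and "p < 1" and "c > 0"
    and "distinct stream" and "set stream = N"
    and "OPT \<subseteq> N" and "card OPT \<le> k"
    and "\<forall>S\<subseteq>N. card S \<le> k \<longrightarrow> f S \<le> f OPT"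
    and "norm1 N (alg1_x N f k p c \<tau> stream) < real k"
  shows "multilinear N f (\<lambda>v. alg1_x N f k p c \<tau> stream v
            + indicator (OPT - supp N (alg1_x N f k p c \<tau> stream)) v)
         \<ge> (1 - p) * (p * f OPT + (1 - p) * f (OPT - supp N (alg1_x N f k p c \<tau> stream)))"
proof -
  note fin = assms(1) and fnn = assms(2) and sm = assms(3) and p0 = assms(5) and p1 = assms(6)
  define x where "x = alg1_x N f k p c \<tau> stream"
  define S where "S = supp N x"
  define T where "T = OPT - S"
  define y where "y = (\<lambda>v. x v + indicator T v)"
  have inv: "\<forall>v. x v = 0 \<or> x v = p"
    using alg_inv[OF fin p0, of stream f k c \<tau>] assms(8,9,13)
    unfolding x_def alg1_x_def by auto
  have S_eq: "S = {v\<in>N. x v = p}" unfolding S_def supp_def using inv p0 by force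
  have yv: "\<forall>v\<in>N. y v = 0 \<or> y v = 1 \<or> y v = p"
    unfolding y_def T_def S_eq using inv by (auto simp: indicator_def)
  have Sy: "{v\<in>N. y v = p} = S"
  proof -
    have "y v = p \<longleftrightarrow> x v = p" if "v \<in> N" for v
      using inv[rule_format, of v] p0 p1 that assms(10) unfolding y_def T_def S_eq
      by (auto simp: indicator_def)
    then show ?thesis unfolding S_eq by auto
  qed
  have Ty: "{v\<in>N. y v = 1} = T"
  proof -
    have "y v = 1 \<longleftrightarrow> v \<in> T" if "v \<in> N" for v
      using inv[rule_format, of v] p0 p1 that assms(10) unfolding y_def T_def S_eq
      by (auto simp: indicator_def)
    then show ?thesis unfolding T_def S_eq using assms(10) by auto
  qed
  have finS: "finite S" unfolding S_def supp_def using fin by simp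
  define B where "B = S \<inter> OPT"
  define C where "C = S - OPT"
  have finB: "finite B" "finite C" unfolding B_def C_def using finS by auto
  have SBC: "S = B \<union> C" unfolding B_def C_def by auto
  have SN: "S \<subseteq> N" unfolding S_def supp_def by auto
  have main: "multilinear N f y = multilinear S (\<lambda>R. f (T \<union> R)) (\<lambda>_. p)"
    using bridge[OF fin, of p y f] yv p0 p1 Sy Ty by simp
  have pp: "0 \<le> p" "p \<le> 1" using p0 p1 by auto
  have c1: "multilinear S (\<lambda>R. f (T \<union> R)) (\<lambda>_. p)
     \<ge> (1 - p) * multilinear B (\<lambda>R. f (T \<union> R)) (\<lambda>_. p)
       + p * multilinear B (\<lambda>R. f (T \<union> C \<union> R)) (\<lambda>_. p)"
    unfolding SBC
    by (rule conc[OF finB(2) finB(1) sm pp]) (use SN assms(10) in \<open>auto simp: B_def C_def T_def\<close>)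
  have nn: "multilinear B (\<lambda>R. f (T \<union> C \<union> R)) (\<lambda>_. p) \<ge> 0"
  proof (rule ml_nonneg[OF finB(1)])
    show "\<forall>A\<subseteq>B. 0 \<le> f (T \<union> C \<union> A)"
    proof (intro allI impI)
      fix A assume "A \<subseteq> B"
      then have "T \<union> C \<union> A \<subseteq> N" using SN assms(10) unfolding B_def C_def T_def by auto
      then show "0 \<le> f (T \<union> C \<union> A)" using fnn by blast
    qed
  qed (use pp in auto)
  have c2: "multilinear ({} \<union> B) (\<lambda>R. f (T \<union> R)) (\<lambda>_. p)
     \<ge> (1 - p) * multilinear {} (\<lambda>R. f (T \<union> R)) (\<lambda>_. p)
       + p * multilinear {} (\<lambda>R. f (T \<union> B \<union> R)) (\<lambda>_. p)"
    by (rule conc[OF finB(1) _ sm pp]) (use SN assms(10) in \<open>auto simp: B_def C_def T_def\<close>)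
  have TB: "T \<union> B = OPT" unfolding T_def B_def by auto
  have c3: "multilinear B (\<lambda>R. f (T \<union> R)) (\<lambda>_. p) \<ge> (1 - p) * f T + p * f OPT"
    using c2 TB by (simp add: ml_empty)
  have "(1 - p) * multilinear B (\<lambda>R. f (T \<union> R)) (\<lambda>_. p) \<ge> (1 - p) * ((1 - p) * f T + p * f OPT)"
    using c3 pp by (intro mult_left_mono) auto
  then have "multilinear N f y \<ge> (1 - p) * (p * f OPT + (1 - p) * f T)"
    using main c1 nn pp by (simp add: algebra_simps) (smt (verit) mult_nonneg_nonneg)
  then show ?thesis unfolding y_def T_def S_def x_def .
qed

end
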